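(* Let $(X,d)$ be a complete metric space and let $G:X\times X\to X$ be a mapping such that (a) $G(x,x)=x$ for all $x\in X$, and (b) for $x,y\in X$, $G(x,y)=x$ implies $y=x$. Let $T:X\to P_{cl}(X)$ be a multivalued operator with $SFix(T)\neq\emptyset$ and let $T_G(x)=\{G(x,u):u\in T(x)\}$ be the admissible perturbation of $T$ corresponding to $G$. Suppose there exist $\alpha,\beta,\gamma\ge0$ with $\alpha+\beta+\gamma<1$ such that $$H(T_G(x),T_G(y))\le\alpha d(x,y)+\beta D(x,T_G(y))+\gamma D(y,T_G(x))\quad\text{for all }x,y\in X,$$ so that $SFix(T)=\{x^*\}$ for some $x^*$, and suppose moreover that (ii) there exists $l\in(0,1)$ with $H(T(x),\{x^*\})\le l\,H(T_G(x),\{x^*\})$ for all $x\in X$, and (iii) there exists $L>0$ with $D(x,T_G(x))\le L\,D(x,T(x))$ for all $x\in X$. Then the strict fixed point problem $T(x)=\{x\}$ has the Ostrowski stability property: $T$ has a unique strict fixed point $x^*$, and for every sequence $(v_n)_{n\in\mathbb N}\subset X$ with $D(v_{n+1},T(v_n))\to0$ we have $v_n\to x^*$.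
   Context: $P_{cl}(X)$ is the family of nonempty closed subsets of $X$; $SFix(T)=\{x:T(x)=\{x\}\}$. For nonempty $A,B\subseteq X$: $D(a,B)=\inf_{b\in B}d(a,b)$, $e(A,B)=\sup_{a\in A}D(a,B)$, $H(A,B)=\max\{e(A,B),e(B,A)\}$. *)

theory Defs
  imports "HOL-Analysis.Analysis"
begin

text \<open>D(a,B) = inf over b in B of d(a,b): the library's infdist (for nonempty B).\<close>

definition excess :: "'a::metric_space set \<Rightarrow> 'a set \<Rightarrow> ereal" where
  "excess A B = (SUP a\<in>A. ereal (infdist a B))"

definition Hdist :: "'a::metric_space set \<Rightarrow> 'a set \<Rightarrow> ereal" where
  "Hdist A B = max (excess A B) (excess B A)"

definition SFix :: "('a \<Rightarrow> 'a set) \<Rightarrow> 'a set" where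
  "SFix T = {x. T x = {x}}"

definition adm_pert :: "('a \<Rightarrow> 'a \<Rightarrow> 'a) \<Rightarrow> ('a \<Rightarrow> 'a set) \<Rightarrow> 'a \<Rightarrow> 'a set" where
  "adm_pert G T x = (\<lambda>u. G x u) ` T x"

end

theory Submission
  imports Defs
begin

lemma seq_lemma:
  fixes a eps :: "nat \<Rightarrow> real" and c :: real
  assumes c: "0 \<le> c" "c < 1" and a0: "\<And>n. 0 \<le> a n"
    and rec: "\<And>n. a (Suc n) \<le> c * a n + eps n" and e: "eps \<longlonglongrightarrow> 0"
  shows "a \<longlonglongrightarrow> 0"
proof (rule LIMSEQ_I)
  fix r :: real assume r: "0 < r"
  have "(1 - c) * r / 2 > 0" using r c by simp
  then obtain N where N: "\<And>n. n \<ge> N \<Longrightarrow> norm (eps n) < (1 - c) * r / 2"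
    using LIMSEQ_D[OF e] by fastforce
  define b where "b n = max (a n - r/2) 0" for n
  have step: "b (Suc n) \<le> c * b n" if "n \<ge> N" for n
  proof -
    have en: "eps n < (1 - c) * r / 2" using N[OF that] by simp
    show ?thesis
    proof (cases "a n \<ge> r/2")
      case True
      have "a (Suc n) - r/2 \<le> c * (a n - r/2)" using rec[of n] en by (simp add: algebra_simps)
      moreover have "c * (a n - r/2) \<le> c * b n" using c unfolding b_def by (intro mult_left_mono) auto
      moreover have "0 \<le> c * b n" using c unfolding b_def by simp
      ultimately show ?thesis unfolding b_def by simp
    next
      case False
      have "c * a n \<le> c * (r/2)" using False c by (intro mult_left_mono) auto
      then have "a (Suc n) - r/2 < 0" using rec[of n] en by (simp add: algebra_simps)
      moreover have "0 \<le> c * b n" using c unfolding b_def by simp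
      ultimately show ?thesis unfolding b_def by simp
    qed
  qed
  have bm: "b (N + m) \<le> c ^ m * b N" for m
  proof (induction m)
    case 0 then show ?case by simp
  next
    case (Suc m)
    have "b (N + Suc m) \<le> c * b (N + m)" using step[of "N+m"] by simp
    also have "\<dots> \<le> c * (c ^ m * b N)" using Suc c by (intro mult_left_mono) auto
    finally show ?case by (simp add: algebra_simps)
  qed
  have "(\<lambda>m. c ^ m * b N) \<longlonglongrightarrow> 0" using c by (intro tendsto_mult_left_zero LIMSEQ_power_zero) auto
  then obtain M where M: "\<And>m. m \<ge> M \<Longrightarrow> norm (c ^ m * b N) < r/2"
    using LIMSEQ_D[of _ 0 "r/2"] r by fastforce
  show "\<exists>no. \<forall>n\<ge>no. norm (a n - 0) < r"
  proof (intro exI allI impI)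
    fix n assume "N + M \<le> n"
    then obtain m where m: "n = N + m" "m \<ge> M" by (metis add_le_imp_le_left le_add_diff_inverse le_add1 le_trans)
    have "b n < r/2" using bm[of m] M[OF m(2)] m(1) by simp
    then show "norm (a n - 0) < r" using a0[of n] unfolding b_def by (simp add: max_def split: if_splits)
  qed
qed

lemma excess_single: "excess A {x} = (SUP a\<in>A. ereal (dist a x))"
  unfolding excess_def by simp

lemma excess_single_left: "excess {x} A = ereal (infdist x A)"
  unfolding excess_def by simp

lemma Hdist_ge_infdist: "ereal (infdist x A) \<le> Hdist A {x}"
  unfolding Hdist_def excess_single_left by simp

lemma Hdist_single: "Hdist {x} {y} = ereal (dist x y)"
  unfolding Hdist_def excess_def by (simp add: dist_commute)

lemma Hdist_bound: "Hdist A {x} \<le> ereal r \<Longrightarrow> a \<in> A \<Longrightarrow> dist a x \<le> r"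
proof -
  assume h: "Hdist A {x} \<le> ereal r" and a: "a \<in> A"
  have "excess A {x} \<le> ereal r" using h unfolding Hdist_def by simp
  then have "ereal (dist a x) \<le> ereal r" unfolding excess_single using a
    by (meson SUP_upper order_trans)
  then show ?thesis by simp
qed

lemma dist_via_infdist:
  assumes "A \<noteq> {}" "\<And>a. a \<in> A \<Longrightarrow> dist a x \<le> r"
  shows "dist y x \<le> infdist y A + r"
proof -
  have "dist y x - r \<le> infdist y A"
    unfolding infdist_def using assms(1)
  proof (simp, intro cINF_greatest)
    fix a assume "a \<in> A"
    then show "dist y x - r \<le> dist y a" using assms(2)[of a] dist_triangle[of y x a] by simp
  qed (use assms in auto)
  then show ?thesis by simp
qed

theorem mainTheorem7:
  fixes G :: "'a::complete_space \<Rightarrow> 'a \<Rightarrow> 'a"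
    and T :: "'a \<Rightarrow> 'a set"
    and xs :: 'a
    and \<alpha> \<beta> \<gamma> l L :: real
  assumes G_diag: "\<And>x. G x x = x"
    and G_inj: "\<And>x y. G x y = x \<Longrightarrow> y = x"
    and T_cl: "\<And>x. T x \<noteq> {} \<and> closed (T x)"
    and xs_fix: "xs \<in> SFix T"
    and coeffs: "\<alpha> \<ge> 0" "\<beta> \<ge> 0" "\<gamma> \<ge> 0" "\<alpha> + \<beta> + \<gamma> < 1"
    and contr: "\<And>x y. Hdist (adm_pert G T x) (adm_pert G T y)
        \<le> ereal (\<alpha> * dist x y + \<beta> * infdist x (adm_pert G T y) + \<gamma> * infdist y (adm_pert G T x))"
    and l_ii: "0 < l" "l < 1" "\<And>x. Hdist (T x) {xs} \<le> ereal l * Hdist (adm_pert G T x) {xs}"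
    and L_iii: "L > 0" "\<And>x. infdist x (adm_pert G T x) \<le> L * infdist x (T x)"
  shows "SFix T = {xs} \<and>
    (\<forall>v :: nat \<Rightarrow> 'a. (\<lambda>n. infdist (v (Suc n)) (T (v n))) \<longlonglongrightarrow> 0 \<longrightarrow> v \<longlonglongrightarrow> xs)"
proof -
  have Txs: "T xs = {xs}" using xs_fix unfolding SFix_def by simp
  have Axs: "adm_pert G T xs = {xs}" unfolding adm_pert_def Txs by (simp add: G_diag)
  have uniq: "y = xs" if y: "y \<in> SFix T" for y
  proof -
    have Ty: "T y = {y}" using y unfolding SFix_def by simp
    have Ay: "adm_pert G T y = {y}" unfolding adm_pert_def Ty by (simp add: G_diag)
    have "ereal (dist xs y) \<le> ereal (\<alpha> * dist xs y + \<beta> * dist xs y + \<gamma> * dist y xs)"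
      using contr[of xs y] unfolding Axs Ay Hdist_single by simp
    then have "dist xs y \<le> (\<alpha> + \<beta> + \<gamma>) * dist xs y" by (simp add: dist_commute algebra_simps)
    then have "(1 - (\<alpha> + \<beta> + \<gamma>)) * dist xs y \<le> 0" by (simp add: algebra_simps)
    then have "dist xs y \<le> 0" using coeffs(4) by (simp add: mult_le_0_iff)
    then show ?thesis by simp
  qed
  have S: "SFix T = {xs}" using uniq xs_fix by blast
  define c where "c = l * ((\<alpha> + \<beta>) / (1 - \<gamma>))"
  have g1: "1 - \<gamma> > 0" using coeffs by simp
  have k1: "(\<alpha> + \<beta>) / (1 - \<gamma>) < 1" using coeffs g1 by (simp add: divide_less_eq)
  have k0: "(\<alpha> + \<beta>) / (1 - \<gamma>) \<ge> 0" using coeffs g1 by simp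
  have c0: "c \<ge> 0" unfolding c_def using k0 l_ii(1) by (intro mult_nonneg_nonneg) auto
  have "l * ((\<alpha> + \<beta>) / (1 - \<gamma>)) \<le> 1 * ((\<alpha> + \<beta>) / (1 - \<gamma>))"
    using l_ii(2) k0 by (intro mult_right_mono) auto
  then have c1: "c < 1" unfolding c_def using k1 by linarith
  have bound: "dist u xs \<le> c * dist x xs" if u: "u \<in> T x" for x u
  proof -
    let ?A = "adm_pert G T x"
    let ?d = "dist x xs"
    let ?q = "infdist xs ?A"
    have h1: "Hdist ?A {xs} \<le> ereal (\<alpha> * ?d + \<beta> * ?d + \<gamma> * ?q)"
      using contr[of x xs] unfolding Axs by simp
    have h2: "ereal ?q \<le> Hdist ?A {xs}" by (rule Hdist_ge_infdist)
    obtain r where r: "Hdist ?A {xs} = ereal r"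
      using h1 h2 by (cases "Hdist ?A {xs}") auto
    have qr: "?q \<le> r" using h2 r by simp
    have "r \<le> \<alpha> * ?d + \<beta> * ?d + \<gamma> * ?q" using h1 r by simp
    also have "\<dots> \<le> \<alpha> * ?d + \<beta> * ?d + \<gamma> * r" using qr coeffs by (simp add: mult_left_mono)
    finally have "(1 - \<gamma>) * r \<le> (\<alpha> + \<beta>) * ?d" by (simp add: algebra_simps)
    then have rk: "r \<le> (\<alpha> + \<beta>) / (1 - \<gamma>) * ?d" using g1 by (simp add: field_simps)
    have "Hdist (T x) {xs} \<le> ereal (l * r)" using l_ii(3)[of x] r by simp
    then have "dist u xs \<le> l * r" using Hdist_bound u by blast
    also have "\<dots> \<le> l * ((\<alpha> + \<beta>) / (1 - \<gamma>) * ?d)"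
      using rk l_ii(1) by (intro mult_left_mono) auto
    also have "\<dots> = c * ?d" unfolding c_def by simp
    finally show ?thesis .
  qed
  have ostr: "v \<longlonglongrightarrow> xs" if e: "(\<lambda>n. infdist (v (Suc n)) (T (v n))) \<longlonglongrightarrow> 0" for v :: "nat \<Rightarrow> 'a"
  proof -
    have "(\<lambda>n. dist (v n) xs) \<longlonglongrightarrow> 0"
    proof (rule seq_lemma[OF c0 c1 _ _ e])
      fix n
      have "dist (v (Suc n)) xs \<le> infdist (v (Suc n)) (T (v n)) + c * dist (v n) xs"
        using dist_via_infdist[of "T (v n)" xs "c * dist (v n) xs" "v (Suc n)"] T_cl bound by blast
      then show "dist (v (Suc n)) xs \<le> c * dist (v n) xs + infdist (v (Suc n)) (T (v n))" by simp
    qed simp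
    then show ?thesis using tendsto_dist_iff by blast
  qed
  show ?thesis using S ostr by blast
qed

end
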